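(* Let $G=(V,E)$ be a connected undirected unweighted graph in which every node has a self-loop. Then the set function $S\mapsto\operatorname{fp}^{\infty}(G^S)$ on subsets of $V$ is submodular.
   Context: Positional Voter model. A graph $G=(V,E,w)$ has node set $V$ with $|V|=n$, edge set $E\subseteq V\times V$ and weights $w\colon E\to\mathbb{R}_{>0}$; $\operatorname{in}(u)=\{v\in V:(v,u)\in E\}$. "Undirected unweighted" means $E$ is symmetric and $w\equiv 1$; "self-loop at $u$" means $(u,u)\in E$. A configuration is a set $X\subseteq V$ (the nodes carrying the novel trait $A$). Given a biased set $S\subseteq V$ and bias $\delta\ge 0$, define $f^S_X(v\mid u)=1+\delta$ if $v\in X$ and $u\in S$, and $1$ otherwise. The process $(\mathcal{X}_t)_{t\ge0}$: given $\mathcal{X}_t=X$, a node $u$ is chosen uniformly at random from $V$, then $v\in\operatorname{in}(u)$ is chosen with probability $\frac{f^S_X(v\mid u)\,w(v,u)}{\sum_{x\in\operatorname{in}(u)} f^S_X(x\mid u)\,w(x,u)}$, and $\mathcal{X}_{t+1}=X\cup\{u\}$ if $v\in X$, $\mathcal{X}_{t+1}=X\setminus\{u\}$ otherwise. Define $\operatorname{fp}(G^S,\delta,X)=\mathbb{P}[\exists t\ge0:\mathcal{X}_t=V\mid\mathcal{X}_0=X]$, $\operatorname{fp}(G^S,\delta)=\frac1n\sum_{u\in V}\operatorname{fp}(G^S,\delta,\{u\})$, and $\operatorname{fp}^{\infty}(G^S)=\lim_{\delta\to\infty}\operatorname{fp}(G^S,\delta)$. A set function $f$ on subsets of $V$ is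 submodular if $f(S_1)+f(S_2)\ge f(S_1\cup S_2)+f(S_1\cap S_2)$ for all $S_1,S_2\subseteq V$. *)

theory Defs
  imports "HOL-Analysis.Analysis"
begin

definition in_nbrs :: "('a \<times> 'a) set \<Rightarrow> 'a \<Rightarrow> 'a set" where
  "in_nbrs E u = {v. (v, u) \<in> E}"

definition fbias :: "'a set \<Rightarrow> real \<Rightarrow> 'a set \<Rightarrow> 'a \<Rightarrow> 'a \<Rightarrow> real" where
  "fbias S \<delta> X v u = (if v \<in> X \<and> u \<in> S then 1 + \<delta> else 1)"

text \<open>Expected value of h at the next configuration, given the current configuration X:
  u uniform on V, then v \<in> in(u) with probability proportional to f^S_X(v|u) w(v,u);
  the new configuration is X \<union> {u} if v \<in> X and X - {u} otherwise.\<close>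
definition step_exp ::
  "'a set \<Rightarrow> ('a \<times> 'a) set \<Rightarrow> ('a \<times> 'a \<Rightarrow> real) \<Rightarrow> 'a set \<Rightarrow> real \<Rightarrow> 'a set
     \<Rightarrow> ('a set \<Rightarrow> real) \<Rightarrow> real" where
  "step_exp V E w S \<delta> X h =
     (\<Sum>u\<in>V. (1 / real (card V)) *
        (\<Sum>v\<in>in_nbrs E u.
           (fbias S \<delta> X v u * w (v, u) / (\<Sum>x\<in>in_nbrs E u. fbias S \<delta> X x u * w (x, u)))
           * h (if v \<in> X then insert u X else X - {u})))"

text \<open>hit_within N X = P[\<exists>t \<le> N. X_t = V | X_0 = X].\<close>
fun hit_within ::
  "'a set \<Rightarrow> ('a \<times> 'a) set \<Rightarrow> ('a \<times> 'a \<Rightarrow> real) \<Rightarrow> 'a set \<Rightarrow> real \<Rightarrow> nat \<Rightarrow> 'a set \<Rightarrow> real" where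
  "hit_within V E w S \<delta> 0 X = (if X = V then 1 else 0)"
| "hit_within V E w S \<delta> (Suc N) X =
     (if X = V then 1 else step_exp V E w S \<delta> X (hit_within V E w S \<delta> N))"

text \<open>fp(G^S, \<delta>, X) = P[\<exists>t. X_t = V | X_0 = X] = sup_N P[\<exists>t \<le> N. X_t = V | X_0 = X].\<close>
definition fp_set ::
  "'a set \<Rightarrow> ('a \<times> 'a) set \<Rightarrow> ('a \<times> 'a \<Rightarrow> real) \<Rightarrow> 'a set \<Rightarrow> real \<Rightarrow> 'a set \<Rightarrow> real" where
  "fp_set V E w S \<delta> X = (SUP N. hit_within V E w S \<delta> N X)"

definition fp ::
  "'a set \<Rightarrow> ('a \<times> 'a) set \<Rightarrow> ('a \<times> 'a \<Rightarrow> real) \<Rightarrow> 'a set \<Rightarrow> real \<Rightarrow> real" where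
  "fp V E w S \<delta> = (1 / real (card V)) * (\<Sum>u\<in>V. fp_set V E w S \<delta> {u})"

definition fp_inf ::
  "'a set \<Rightarrow> ('a \<times> 'a) set \<Rightarrow> ('a \<times> 'a \<Rightarrow> real) \<Rightarrow> 'a set \<Rightarrow> real" where
  "fp_inf V E w S = Lim at_top (\<lambda>\<delta>. fp V E w S \<delta>)"

definition submodular_on :: "'a set \<Rightarrow> ('a set \<Rightarrow> real) \<Rightarrow> bool" where
  "submodular_on V f \<longleftrightarrow>
     (\<forall>S1 S2. S1 \<subseteq> V \<longrightarrow> S2 \<subseteq> V \<longrightarrow> f S1 + f S2 \<ge> f (S1 \<union> S2) + f (S1 \<inter> S2))"

end

theory Submission
  imports Defs
begin

locale vm =
  fixes V :: "'a set" and E :: "('a \<times> 'a) set"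
  assumes finV: "finite V" and neV: "V \<noteq> {}" and EV: "E \<subseteq> V \<times> V"
    and symE: "sym E" and reflE: "\<forall>u\<in>V. (u, u) \<in> E"
    and conn: "\<forall>u\<in>V. \<forall>v\<in>V. (u, v) \<in> E\<^sup>*"
begin

abbreviation nn :: real where "nn \<equiv> real (card V)"

definition kk :: "'a set \<Rightarrow> 'a \<Rightarrow> real" where
  "kk X u = real (card (in_nbrs E u \<inter> X))"
definition dd :: "'a \<Rightarrow> real" where
  "dd u = real (card (in_nbrs E u))"
definition aw :: "'a set \<Rightarrow> real \<Rightarrow> 'a set \<Rightarrow> 'a \<Rightarrow> real" where
  "aw S \<delta> X u = (if u \<in> S then (1+\<delta>) * kk X u / ((1+\<delta>) * kk X u + (dd u - kk X u)) else kk X u / dd u)"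
definition a0 :: "'a set \<Rightarrow> 'a \<Rightarrow> real" where
  "a0 X u = kk X u / dd u"
definition Top :: "'a set \<Rightarrow> real \<Rightarrow> ('a set \<Rightarrow> real) \<Rightarrow> 'a set \<Rightarrow> real" where
  "Top S \<delta> h X = (\<Sum>u\<in>V. (1/nn) * (aw S \<delta> X u * h (insert u X) + (1 - aw S \<delta> X u) * h (X - {u})))"

lemma nn_pos: "nn > 0" using finV neV by (simp add: card_gt_0_iff)

lemma nb_sub: "in_nbrs E u \<subseteq> V" using EV by (auto simp: in_nbrs_def)
lemma nb_fin: "finite (in_nbrs E u)" using nb_sub finV finite_subset by blast
lemma nb_self: "u \<in> V \<Longrightarrow> u \<in> in_nbrs E u" using reflE by (auto simp: in_nbrs_def)

lemma dd_ge1: "u \<in> V \<Longrightarrow> dd u \<ge> 1"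
proof -
  assume u: "u \<in> V"
  have "card (in_nbrs E u) \<noteq> 0" using nb_fin nb_self[OF u] by auto
  then show ?thesis by (simp add: dd_def)
qed
lemma dd_le: "dd u \<le> nn" unfolding dd_def using card_mono[OF finV nb_sub] by simp
lemma kk_ge0: "kk X u \<ge> 0" by (simp add: kk_def)
lemma kk_le: "kk X u \<le> dd u" unfolding kk_def dd_def using card_mono[OF nb_fin, of "in_nbrs E u \<inter> X"] by auto
lemma kk_pos: "in_nbrs E u \<inter> X \<noteq> {} \<Longrightarrow> kk X u \<ge> 1"
proof -
  assume "in_nbrs E u \<inter> X \<noteq> {}"
  then have "card (in_nbrs E u \<inter> X) \<noteq> 0" using nb_fin by auto
  then show ?thesis by (simp add: kk_def)
qed
lemma kk_zero: "in_nbrs E u \<inter> X = {} \<Longrightarrow> kk X u = 0" by (simp add: kk_def)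
lemma kk_full: "in_nbrs E u \<subseteq> X \<Longrightarrow> kk X u = dd u" by (simp add: kk_def dd_def Int_absorb2)

lemma aw_bounds: assumes "u \<in> V" "\<delta> \<ge> 0" shows "0 \<le> aw S \<delta> X u" "aw S \<delta> X u \<le> 1"
proof -
  have d: "dd u \<ge> 1" using dd_ge1 assms by auto
  have k: "0 \<le> kk X u" "kk X u \<le> dd u" using kk_ge0 kk_le by auto
  have den: "(1+\<delta>) * kk X u + (dd u - kk X u) > 0"
  proof (cases "kk X u = 0")
    case True then show ?thesis using d by simp
  next
    case False then have "kk X u > 0" using k by auto
    then show ?thesis using k assms(2) by (smt (verit) mult_pos_pos)
  qed
  show "0 \<le> aw S \<delta> X u" unfolding aw_def using den k d assms by auto
  show "aw S \<delta> X u \<le> 1" unfolding aw_def using den k d assms by (auto simp: divide_le_eq_1)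
qed

lemma a0_bounds: assumes "u \<in> V" shows "0 \<le> a0 X u" "a0 X u \<le> 1"
  using dd_ge1[OF assms] kk_ge0[of X u] kk_le[of X u] by (auto simp: a0_def divide_le_eq_1)

lemma aw_nS: "u \<notin> S \<Longrightarrow> aw S \<delta> X u = a0 X u" by (simp add: aw_def a0_def)

lemma aw_ge_a0: assumes "u \<in> V" "\<delta> \<ge> 0" shows "aw S \<delta> X u \<ge> a0 X u"
proof (cases "u \<in> S")
  case False then show ?thesis by (simp add: aw_nS)
next
  case True
  have d: "dd u \<ge> 1" using dd_ge1 assms by auto
  have k: "0 \<le> kk X u" "kk X u \<le> dd u" using kk_ge0 kk_le by auto
  show ?thesis
  proof (cases "kk X u = 0")
    case True then show ?thesis using d by (simp add: aw_def a0_def)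
  next
    case False then have kp: "kk X u > 0" using k by auto
    define k where "k = kk X u" define d where "d = dd u"
    have "k / d \<le> (1+\<delta>) * k / ((1+\<delta>) * k + (d - k))"
    proof -
      have den: "(1+\<delta>) * k + (d - k) > 0" using kp k assms(2) unfolding k_def d_def by (smt (verit) mult_pos_pos)
      have "k * ((1+\<delta>) * k + (d - k)) \<le> (1+\<delta>) * k * d"
      proof -
        have "k * ((1+\<delta>) * k + (d - k)) = (1+\<delta>) * k * d - \<delta> * k * (d - k)" by (simp add: algebra_simps)
        moreover have "\<delta> * k * (d - k) \<ge> 0" using assms(2) k kp unfolding k_def d_def by simp
        ultimately show ?thesis by simp
      qed
      then show ?thesis using den d unfolding d_def by (simp add: divide_simps mult.commute)
    qed
    then show ?thesis using True by (simp add: aw_def a0_def k_def d_def)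
  qed
qed

lemma aw_zero: "in_nbrs E u \<inter> X = {} \<Longrightarrow> aw S \<delta> X u = 0" by (simp add: aw_def kk_zero)
lemma a0_zero: "in_nbrs E u \<inter> X = {} \<Longrightarrow> a0 X u = 0" by (simp add: a0_def kk_zero)
lemma aw_one: assumes "u \<in> V" "in_nbrs E u \<subseteq> X" "\<delta> \<ge> 0" shows "aw S \<delta> X u = 1"
proof -
  have d: "dd u \<ge> 1" using dd_ge1 assms by auto
  then show ?thesis using kk_full[OF assms(2)] assms(3) by (simp add: aw_def)
qed

lemma aw_touch: assumes "u \<in> V" "u \<in> S" "in_nbrs E u \<inter> X \<noteq> {}" "\<delta> \<ge> 0"
  shows "1 - aw S \<delta> X u \<le> nn / (1 + \<delta>)"
proof -
  have d: "dd u \<ge> 1" "dd u \<le> nn" using dd_ge1 dd_le assms by auto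
  have k: "1 \<le> kk X u" "kk X u \<le> dd u" using kk_pos[OF assms(3)] kk_le by auto
  define k where "k = kk X u" define d where "d = dd u"
  have den: "(1+\<delta>) * k + (d - k) \<ge> 1 + \<delta>" using k assms(4) unfolding k_def d_def
    by (smt (verit) mult_left_mono mult_cancel_left1)
  have "1 - aw S \<delta> X u = (d - k) / ((1+\<delta>) * k + (d - k))"
    using den assms(2,4) by (simp add: aw_def k_def d_def divide_simps)
  also have "\<dots> \<le> (d - k) / (1 + \<delta>)"
    using den k assms(4) unfolding k_def d_def by (intro divide_left_mono) auto
  also have "\<dots> \<le> nn / (1+\<delta>)" using d k assms(4) unfolding k_def d_def by (intro divide_right_mono) auto
  finally show ?thesis .
qed


lemma sum_split_X:
  fixes g :: "'a \<Rightarrow> real"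
  shows "(\<Sum>v\<in>in_nbrs E u. g v * h (if v \<in> X then A else B)) =
     (\<Sum>v\<in>in_nbrs E u \<inter> X. g v) * h A + (\<Sum>v\<in>in_nbrs E u - X. g v) * h B"
proof -
  have "(\<Sum>v\<in>in_nbrs E u. g v * h (if v \<in> X then A else B)) =
     (\<Sum>v\<in>in_nbrs E u. (if v \<in> X then g v * h A else g v * h B))"
    by (rule sum.cong) auto
  also have "\<dots> = (\<Sum>v\<in>in_nbrs E u \<inter> X. g v * h A) + (\<Sum>v\<in>in_nbrs E u - X. g v * h B)"
    using nb_fin by (simp add: sum.If_cases Diff_eq)
  finally show ?thesis by (simp add: sum_distrib_right)
qed

lemma card_split: "card (in_nbrs E u - X) = card (in_nbrs E u) - card (in_nbrs E u \<inter> X)"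
  using nb_fin by (simp add: card_Diff_subset_Int Int_commute)

lemma step_exp_Top:
  assumes "\<delta> \<ge> 0"
  shows "step_exp V E (\<lambda>_. 1) S \<delta> X h = Top S \<delta> h X"
  unfolding step_exp_def Top_def
proof (rule sum.cong[OF refl])
  fix u assume u: "u \<in> V"
  define c where "c = (if u \<in> S then 1 + \<delta> else 1)"
  have fin: "finite (in_nbrs E u)" by (rule nb_fin)
  have c1: "c \<ge> 1" using assms by (simp add: c_def)
  have s1: "(\<Sum>v\<in>in_nbrs E u \<inter> X. fbias S \<delta> X v u) = c * kk X u"
    by (simp add: fbias_def c_def kk_def)
  have s2: "(\<Sum>v\<in>in_nbrs E u - X. fbias S \<delta> X v u) = dd u - kk X u"
  proof -
    have "(\<Sum>v\<in>in_nbrs E u - X. fbias S \<delta> X v u) = real (card (in_nbrs E u - X))"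
      by (simp add: fbias_def)
    also have "\<dots> = dd u - kk X u" using card_split[of u X] card_mono[OF fin, of "in_nbrs E u \<inter> X"]
      by (simp add: dd_def kk_def of_nat_diff)
    finally show ?thesis .
  qed
  have Z: "(\<Sum>x\<in>in_nbrs E u. fbias S \<delta> X x u * 1) = c * kk X u + (dd u - kk X u)"
  proof -
    have "(\<Sum>x\<in>in_nbrs E u. fbias S \<delta> X x u * 1) = (\<Sum>x\<in>in_nbrs E u \<inter> X. fbias S \<delta> X x u) + (\<Sum>x\<in>in_nbrs E u - X. fbias S \<delta> X x u)"
      using sum.Int_Diff[OF fin, of "\<lambda>x. fbias S \<delta> X x u" X] by simp
    then show ?thesis using s1 s2 by simp
  qed
  have d: "dd u \<ge> 1" using dd_ge1 u by auto
  have k: "0 \<le> kk X u" "kk X u \<le> dd u" using kk_ge0 kk_le by auto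
  have Zpos: "c * kk X u + (dd u - kk X u) > 0"
  proof (cases "kk X u = 0")
    case True then show ?thesis using d by simp
  next
    case False then have "kk X u > 0" using k by auto
    then show ?thesis using k c1 by (smt (verit) mult_pos_pos)
  qed
  have aweq: "aw S \<delta> X u = c * kk X u / (c * kk X u + (dd u - kk X u))"
    by (simp add: aw_def c_def)
  have "(\<Sum>v\<in>in_nbrs E u. fbias S \<delta> X v u * 1 / (\<Sum>x\<in>in_nbrs E u. fbias S \<delta> X x u * 1) *
           h (if v \<in> X then insert u X else X - {u}))
     = (\<Sum>v\<in>in_nbrs E u \<inter> X. fbias S \<delta> X v u * 1 / (\<Sum>x\<in>in_nbrs E u. fbias S \<delta> X x u * 1)) * h (insert u X)
       + (\<Sum>v\<in>in_nbrs E u - X. fbias S \<delta> X v u * 1 / (\<Sum>x\<in>in_nbrs E u. fbias S \<delta> X x u * 1)) * h (X - {u})"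
    by (rule sum_split_X)
  also have "\<dots> = aw S \<delta> X u * h (insert u X) + (1 - aw S \<delta> X u) * h (X - {u})"
  proof -
    have e1: "(\<Sum>v\<in>in_nbrs E u \<inter> X. fbias S \<delta> X v u * 1 / (\<Sum>x\<in>in_nbrs E u. fbias S \<delta> X x u * 1)) = aw S \<delta> X u"
      unfolding Z aweq using s1 by (simp add: sum_divide_distrib[symmetric])
    have e2: "(\<Sum>v\<in>in_nbrs E u - X. fbias S \<delta> X v u * 1 / (\<Sum>x\<in>in_nbrs E u. fbias S \<delta> X x u * 1)) = 1 - aw S \<delta> X u"
      unfolding Z aweq using s2 Zpos by (simp add: sum_divide_distrib[symmetric] divide_simps)
    show ?thesis using e1 e2 by simp
  qed
  finally show "1 / real (card V) * (\<Sum>v\<in>in_nbrs E u. fbias S \<delta> X v u * 1 / (\<Sum>x\<in>in_nbrs E u. fbias S \<delta> X x u * 1) *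
           h (if v \<in> X then insert u X else X - {u})) =
        1 / real (card V) * (aw S \<delta> X u * h (insert u X) + (1 - aw S \<delta> X u) * h (X - {u}))" by simp
qed


lemma Top_const: "Top S \<delta> (\<lambda>_. c) X = c"
proof -
  have "Top S \<delta> (\<lambda>_. c) X = (\<Sum>u\<in>V. (1/nn) * c)" unfolding Top_def by (simp add: algebra_simps)
  also have "\<dots> = c" using nn_pos by simp
  finally show ?thesis .
qed

lemma Top_mono:
  assumes "\<delta> \<ge> 0" "\<And>u. u \<in> V \<Longrightarrow> h1 (insert u X) \<le> h2 (insert u X)" "\<And>u. u \<in> V \<Longrightarrow> h1 (X - {u}) \<le> h2 (X - {u})"
  shows "Top S \<delta> h1 X \<le> Top S \<delta> h2 X"
  unfolding Top_def
proof (rule sum_mono)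
  fix u assume u: "u \<in> V"
  have a: "0 \<le> aw S \<delta> X u" "aw S \<delta> X u \<le> 1" using aw_bounds[OF u assms(1)] by auto
  have "aw S \<delta> X u * h1 (insert u X) \<le> aw S \<delta> X u * h2 (insert u X)"
    using a assms(2)[OF u] by (simp add: mult_left_mono)
  moreover have "(1 - aw S \<delta> X u) * h1 (X - {u}) \<le> (1 - aw S \<delta> X u) * h2 (X - {u})"
    using a assms(3)[OF u] by (simp add: mult_left_mono)
  ultimately show "1 / nn * (aw S \<delta> X u * h1 (insert u X) + (1 - aw S \<delta> X u) * h1 (X - {u}))
         \<le> 1 / nn * (aw S \<delta> X u * h2 (insert u X) + (1 - aw S \<delta> X u) * h2 (X - {u}))"
    using nn_pos by (intro mult_left_mono) auto
qed

lemma Top_add: "Top S \<delta> (\<lambda>Y. h1 Y + h2 Y) X = Top S \<delta> h1 X + Top S \<delta> h2 X"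
  unfolding Top_def by (simp add: sum.distrib[symmetric] algebra_simps)

lemma Top_cmult: "Top S \<delta> (\<lambda>Y. c * h Y) X = c * Top S \<delta> h X"
  unfolding Top_def by (simp add: sum_distrib_left algebra_simps)

lemma Top_sum: "Top S \<delta> (\<lambda>Y. \<Sum>k\<in>K. f k Y) X = (\<Sum>k\<in>K. Top S \<delta> (f k) X)"
  unfolding Top_def by (simp add: sum_distrib_left sum.distrib[symmetric] algebra_simps sum.swap[of _ V])

lemma Top_empty: "Top S \<delta> h {} = h {}"
proof -
  have "Top S \<delta> h {} = (\<Sum>u\<in>V. (1/nn) * h {})" unfolding Top_def by (simp add: aw_zero)
  then show ?thesis using nn_pos by simp
qed

lemma Top_V: assumes "\<delta> \<ge> 0" shows "Top S \<delta> h V = h V"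
proof -
  have "Top S \<delta> h V = (\<Sum>u\<in>V. (1/nn) * h V)" unfolding Top_def
    by (rule sum.cong[OF refl]) (simp add: aw_one[OF _ nb_sub assms] insert_absorb)
  then show ?thesis using nn_pos by simp
qed

lemma boundary:
  assumes "X \<subseteq> V" "X \<noteq> {}" "X \<noteq> V"
  shows "\<exists>u\<in>V. u \<notin> X \<and> in_nbrs E u \<inter> X \<noteq> {}"
proof -
  obtain x where x: "x \<in> X" using assms(2) by auto
  obtain y where y: "y \<in> V" "y \<notin> X" using assms(1,3) by auto
  have "(x, y) \<in> E\<^sup>*" using conn x y assms(1) by auto
  have "\<exists>a b. (a, b) \<in> E \<and> a \<in> X \<and> b \<notin> X"
    using \<open>(x, y) \<in> E\<^sup>*\<close> y(2)
  proof (induction rule: rtrancl_induct)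
    case base then show ?case using x by auto
  next
    case (step y z)
    then show ?case by blast
  qed
  then obtain a b where ab: "(a, b) \<in> E" "a \<in> X" "b \<notin> X" by auto
  have "b \<in> V" using ab EV by auto
  moreover have "a \<in> in_nbrs E b" using ab by (simp add: in_nbrs_def)
  ultimately show ?thesis using ab by auto
qed

lemma double_count:
  assumes "X \<subseteq> V"
  shows "(\<Sum>u\<in>V. kk X u) = (\<Sum>x\<in>X. dd x)"
proof -
  have finX: "finite X" using assms finV finite_subset by blast
  have "\<And>u. kk X u = (\<Sum>x\<in>X. if (x, u) \<in> E then 1 else 0)"
  proof -
    fix u
    have "in_nbrs E u \<inter> X = X \<inter> {x. (x, u) \<in> E}" by (auto simp: in_nbrs_def)
    then show "kk X u = (\<Sum>x\<in>X. if (x, u) \<in> E then 1 else 0)"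
      using finX by (simp add: kk_def sum.If_cases)
  qed
  then have "(\<Sum>u\<in>V. kk X u) = (\<Sum>u\<in>V. \<Sum>x\<in>X. if (x, u) \<in> E then 1 else 0)" by simp
  also have "\<dots> = (\<Sum>x\<in>X. \<Sum>u\<in>V. if (x, u) \<in> E then 1 else 0)" by (rule sum.swap)
  also have "\<dots> = (\<Sum>x\<in>X. dd x)"
  proof (rule sum.cong[OF refl])
    fix x assume "x \<in> X"
    have "in_nbrs E x = V \<inter> {u. (x, u) \<in> E}" using symE EV by (auto simp: in_nbrs_def sym_def)
    then show "(\<Sum>u\<in>V. if (x, u) \<in> E then 1 else 0) = dd x"
      using finV by (simp add: dd_def sum.If_cases)
  qed
  finally show ?thesis .
qed


definition MM :: "'a set \<Rightarrow> real" where "MM X = (\<Sum>x\<in>X. dd x)"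
definition gg :: "'a set \<Rightarrow> real" where "gg X = nn * ((MM V)\<^sup>2 - (MM X)\<^sup>2)"
definition Gb :: real where "Gb = nn * (MM V)\<^sup>2"

lemma dd_nonneg: "dd x \<ge> 0" by (simp add: dd_def)

lemma MM_nonneg: "MM X \<ge> 0" unfolding MM_def by (simp add: sum_nonneg dd_nonneg)

lemma MM_mono: assumes "X \<subseteq> V" shows "MM X \<le> MM V"
  unfolding MM_def using finV assms by (intro sum_mono2) (auto simp: dd_nonneg)

lemma gg_nonneg: "X \<subseteq> V \<Longrightarrow> gg X \<ge> 0"
  unfolding gg_def using MM_mono[of X] MM_nonneg[of X] nn_pos
  by (simp add: power_mono)

lemma gg_le: "gg X \<le> Gb" unfolding gg_def Gb_def using nn_pos by simp

lemma Gb_nonneg: "Gb \<ge> 0" unfolding Gb_def using nn_pos by simp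

lemma MM_ins: assumes "X \<subseteq> V" shows "MM (insert u X) = MM X + (if u \<in> X then 0 else dd u)"
proof -
  have "finite X" using assms finV finite_subset by blast
  then show ?thesis unfolding MM_def by (simp add: insert_absorb)
qed

lemma MM_del: assumes "X \<subseteq> V" shows "MM (X - {u}) = MM X - (if u \<in> X then dd u else 0)"
proof -
  have "finite X" using assms finV finite_subset by blast
  then show ?thesis unfolding MM_def by (simp add: sum_diff1)
qed

lemma gg_super:
  assumes X: "X \<subseteq> V" "X \<noteq> {}" "X \<noteq> V" and dl: "\<delta> \<ge> 0"
  shows "1 + Top S \<delta> gg X \<le> gg X"
proof -
  define M where "M = MM X"
  define a where "a = (\<lambda>u. aw S \<delta> X u)"
  define q where "q = (\<lambda>u. 2 * M * dd u * (a u - (if u \<in> X then 1 else 0))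
       + (dd u)\<^sup>2 * (if u \<in> X then 1 - a u else a u))"
  have per: "a u * gg (insert u X) + (1 - a u) * gg (X - {u}) = nn * ((MM V)\<^sup>2 - M\<^sup>2) - nn * q u" for u
  proof (cases "u \<in> X")
    case True
    show ?thesis unfolding gg_def MM_ins[OF X(1)] MM_del[OF X(1)] q_def M_def using True
      by (simp add: algebra_simps power2_eq_square)
  next
    case False
    show ?thesis unfolding gg_def MM_ins[OF X(1)] MM_del[OF X(1)] q_def M_def using False
      by (simp add: algebra_simps power2_eq_square)
  qed
  have TopEq: "Top S \<delta> gg X = gg X - (\<Sum>u\<in>V. q u)"
  proof -
    have "Top S \<delta> gg X = (\<Sum>u\<in>V. (1/nn) * (nn * ((MM V)\<^sup>2 - M\<^sup>2) - nn * q u))"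
      unfolding Top_def using per unfolding a_def by simp
    also have "\<dots> = (\<Sum>u\<in>V. ((MM V)\<^sup>2 - M\<^sup>2) - q u)" using nn_pos by (simp add: algebra_simps)
    also have "\<dots> = nn * ((MM V)\<^sup>2 - M\<^sup>2) - (\<Sum>u\<in>V. q u)" by (simp add: sum_subtractf)
    finally show ?thesis unfolding gg_def M_def .
  qed
  have s1: "(\<Sum>u\<in>V. dd u * (a u - (if u \<in> X then 1 else 0))) \<ge> 0"
  proof -
    have "(\<Sum>u\<in>V. dd u * (a u - (if u \<in> X then 1 else 0))) \<ge> (\<Sum>u\<in>V. dd u * (a0 X u - (if u \<in> X then 1 else 0)))"
      unfolding a_def using aw_ge_a0[OF _ dl] dd_nonneg by (intro sum_mono mult_left_mono) auto
    also have "(\<Sum>u\<in>V. dd u * (a0 X u - (if u \<in> X then 1 else 0))) = (\<Sum>u\<in>V. kk X u) - (\<Sum>u\<in>V. if u \<in> X then dd u else 0)"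
    proof -
      have "\<And>u. u \<in> V \<Longrightarrow> dd u * (a0 X u - (if u \<in> X then 1 else 0)) = kk X u - (if u \<in> X then dd u else 0)"
      proof -
        fix u assume "u \<in> V"
        then have "dd u \<noteq> 0" using dd_ge1[of u] by auto
        then show "dd u * (a0 X u - (if u \<in> X then 1 else 0)) = kk X u - (if u \<in> X then dd u else 0)"
          by (simp add: a0_def right_diff_distrib)
      qed
      then show ?thesis by (simp add: sum_subtractf)
    qed
    also have "\<dots> = 0"
    proof -
      have "(\<Sum>u\<in>V. if u \<in> X then dd u else 0) = (\<Sum>u\<in>X. dd u)"
        using finV X(1) by (simp add: sum.If_cases Int_absorb1)
      then show ?thesis using double_count[OF X(1)] by simp
    qed
    finally show ?thesis by simp
  qed
  have t_nonneg: "\<And>u. u \<in> V \<Longrightarrow> (dd u)\<^sup>2 * (if u \<in> X then 1 - a u else a u) \<ge> 0"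
    using aw_bounds[OF _ dl] unfolding a_def by auto
  obtain u0 where u0: "u0 \<in> V" "u0 \<notin> X" "in_nbrs E u0 \<inter> X \<noteq> {}" using boundary[OF X] by auto
  have "(dd u0)\<^sup>2 * a u0 \<ge> 1"
  proof -
    have "a u0 \<ge> kk X u0 / dd u0" using aw_ge_a0[OF u0(1) dl] unfolding a_def a0_def .
    moreover have "dd u0 \<ge> 1" "kk X u0 \<ge> 1" using dd_ge1[OF u0(1)] kk_pos[OF u0(3)] by auto
    ultimately have "(dd u0)\<^sup>2 * a u0 \<ge> (dd u0)\<^sup>2 * (kk X u0 / dd u0)" by (intro mult_left_mono) auto
    moreover have "(dd u0)\<^sup>2 * (kk X u0 / dd u0) = dd u0 * kk X u0" using \<open>dd u0 \<ge> 1\<close> by (simp add: power2_eq_square)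
    moreover have "dd u0 * kk X u0 \<ge> 1" using \<open>dd u0 \<ge> 1\<close> \<open>kk X u0 \<ge> 1\<close>
      using mult_mono[of 1 "dd u0" 1 "kk X u0"] by simp
    ultimately show ?thesis by linarith
  qed
  have s2: "(\<Sum>u\<in>V. (dd u)\<^sup>2 * (if u \<in> X then 1 - a u else a u)) \<ge> 1"
  proof -
    have "(\<Sum>u\<in>V. (dd u)\<^sup>2 * (if u \<in> X then 1 - a u else a u)) \<ge> (\<Sum>u\<in>{u0}. (dd u)\<^sup>2 * (if u \<in> X then 1 - a u else a u))"
      using finV u0(1) t_nonneg by (intro sum_mono2) auto
    then show ?thesis using u0(2) \<open>(dd u0)\<^sup>2 * a u0 \<ge> 1\<close> by simp
  qed
  have "(\<Sum>u\<in>V. q u) = 2 * M * (\<Sum>u\<in>V. dd u * (a u - (if u \<in> X then 1 else 0)))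
       + (\<Sum>u\<in>V. (dd u)\<^sup>2 * (if u \<in> X then 1 - a u else a u))"
    unfolding q_def sum_distrib_left sum.distrib[symmetric] by (rule sum.cong) (auto simp: algebra_simps)
  moreover have "M \<ge> 0" unfolding M_def by (rule MM_nonneg)
  ultimately have "(\<Sum>u\<in>V. q u) \<ge> 1" using s1 s2 by (smt (verit) mult_nonneg_nonneg)
  then show ?thesis using TopEq by simp
qed


fun ext :: "'a set \<Rightarrow> real \<Rightarrow> nat \<Rightarrow> 'a set \<Rightarrow> real" where
  "ext S \<delta> 0 X = (if X = {} then 1 else 0)"
| "ext S \<delta> (Suc N) X = Top S \<delta> (ext S \<delta> N) X"

fun und :: "'a set \<Rightarrow> real \<Rightarrow> nat \<Rightarrow> 'a set \<Rightarrow> real" where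
  "und S \<delta> 0 X = (if X = {} \<or> X = V then 0 else 1)"
| "und S \<delta> (Suc N) X = (if X = {} \<or> X = V then 0 else Top S \<delta> (und S \<delta> N) X)"

abbreviation hw :: "'a set \<Rightarrow> real \<Rightarrow> nat \<Rightarrow> 'a set \<Rightarrow> real" where
  "hw S \<delta> N X \<equiv> hit_within V E (\<lambda>_. 1) S \<delta> N X"

lemma hw_Suc: "\<delta> \<ge> 0 \<Longrightarrow> hw S \<delta> (Suc N) X = (if X = V then 1 else Top S \<delta> (hw S \<delta> N) X)"
  by (simp add: step_exp_Top)

lemma ext_empty: "ext S \<delta> N {} = 1"
  by (induction N) (auto simp: Top_empty)

lemma ext_V: "\<delta> \<ge> 0 \<Longrightarrow> ext S \<delta> N V = 0"
  using neV by (induction N) (auto simp: Top_V)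

lemma ext_bounds: "\<delta> \<ge> 0 \<Longrightarrow> 0 \<le> ext S \<delta> N X \<and> ext S \<delta> N X \<le> 1"
proof (induction N arbitrary: X)
  case 0 then show ?case by simp
next
  case (Suc N)
  have "Top S \<delta> (\<lambda>_. 0) X \<le> Top S \<delta> (ext S \<delta> N) X" using Suc by (intro Top_mono) auto
  moreover have "Top S \<delta> (ext S \<delta> N) X \<le> Top S \<delta> (\<lambda>_. 1) X" using Suc by (intro Top_mono) auto
  ultimately show ?case by (simp add: Top_const)
qed

lemma und_bounds: "\<delta> \<ge> 0 \<Longrightarrow> 0 \<le> und S \<delta> N X \<and> und S \<delta> N X \<le> 1"
proof (induction N arbitrary: X)
  case 0 then show ?case by simp
next
  case (Suc N)
  have "Top S \<delta> (\<lambda>_. 0) X \<le> Top S \<delta> (und S \<delta> N) X" using Suc by (intro Top_mono) auto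
  moreover have "Top S \<delta> (und S \<delta> N) X \<le> Top S \<delta> (\<lambda>_. 1) X" using Suc by (intro Top_mono) auto
  ultimately show ?case by (simp add: Top_const)
qed

lemma hw_empty: assumes "\<delta> \<ge> 0" shows "hw S \<delta> N {} = 0"
proof (induction N)
  case 0 then show ?case using neV by simp
next
  case (Suc N) then show ?case using neV by (simp only: hw_Suc[OF assms]) (simp add: Top_empty)
qed

lemma total: "\<delta> \<ge> 0 \<Longrightarrow> hw S \<delta> N X + ext S \<delta> N X + und S \<delta> N X = 1"
proof (induction N arbitrary: X)
  case 0 then show ?case using neV by auto
next
  case (Suc N)
  show ?case
  proof (cases "X = V")
    case True then show ?thesis using Suc.prems by (simp add: hw_Suc ext_V[OF Suc.prems] del: ext.simps)
  next
    case nV: False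
    show ?thesis
    proof (cases "X = {}")
      case True then show ?thesis using Suc.prems by (simp add: hw_empty ext_empty del: ext.simps hit_within.simps)
    next
      case False
      have "hw S \<delta> (Suc N) X + ext S \<delta> (Suc N) X + und S \<delta> (Suc N) X
          = Top S \<delta> (\<lambda>Y. hw S \<delta> N Y + ext S \<delta> N Y + und S \<delta> N Y) X"
        using nV False Suc.prems by (simp add: hw_Suc Top_add del: hit_within.simps)
      also have "\<dots> = Top S \<delta> (\<lambda>_. 1) X" using Suc.IH[OF Suc.prems] by simp
      finally show ?thesis by (simp add: Top_const)
    qed
  qed
qed

lemma ext_inc: "\<delta> \<ge> 0 \<Longrightarrow> ext S \<delta> N X \<le> ext S \<delta> (Suc N) X"
proof (induction N arbitrary: X)
  case 0
  show ?case
  proof (cases "X = {}")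
    case True then show ?thesis by (simp add: Top_empty)
  next
    case False
    have "0 \<le> ext S \<delta> (Suc 0) X" using ext_bounds[OF 0] by blast
    then show ?thesis using False by simp
  qed
next
  case (Suc N)
  show ?case using Suc by (simp only: ext.simps) (intro Top_mono; simp)
qed

lemma und_dec: assumes dl: "\<delta> \<ge> 0" shows "und S \<delta> (Suc N) X \<le> und S \<delta> N X"
proof (induction N arbitrary: X)
  case 0
  have "Top S \<delta> (und S \<delta> 0) X \<le> Top S \<delta> (\<lambda>_. 1) X" using und_bounds[OF dl] dl by (intro Top_mono) auto
  then show ?case by (simp add: Top_const)
next
  case (Suc N)
  have "Top S \<delta> (und S \<delta> (Suc N)) X \<le> Top S \<delta> (und S \<delta> N) X" by (intro Top_mono dl Suc.IH)
  then show ?case unfolding und.simps(2)[of S \<delta> "Suc N"] und.simps(2)[of S \<delta> N] by simp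
qed

lemma und_sum: "\<delta> \<ge> 0 \<Longrightarrow> X \<subseteq> V \<Longrightarrow> (\<Sum>k<N. und S \<delta> k X) \<le> gg X"
proof (induction N arbitrary: X)
  case 0 then show ?case using gg_nonneg by simp
next
  case (Suc N)
  show ?case
  proof (cases "X = {} \<or> X = V")
    case True
    then have "(\<Sum>k<Suc N. und S \<delta> k X) = 0"
      by (intro sum.neutral) (metis und.elims)
    then show ?thesis using gg_nonneg[OF Suc.prems(2)] by simp
  next
    case False
    have "(\<Sum>k<Suc N. und S \<delta> k X) = und S \<delta> 0 X + (\<Sum>k<N. und S \<delta> (Suc k) X)"
      by (rule sum.lessThan_Suc_shift)
    also have "\<dots> = 1 + Top S \<delta> (\<lambda>Y. \<Sum>k<N. und S \<delta> k Y) X"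
      using False by (simp add: Top_sum)
    also have "\<dots> \<le> 1 + Top S \<delta> gg X"
    proof (intro add_left_mono Top_mono)
      fix u assume u: "u \<in> V"
      show "(\<Sum>k<N. und S \<delta> k (insert u X)) \<le> gg (insert u X)" using Suc.IH[of "insert u X"] Suc.prems u by auto
      show "(\<Sum>k<N. und S \<delta> k (X - {u})) \<le> gg (X - {u})" using Suc.IH[of "X - {u}"] Suc.prems u by auto
    qed (rule Suc.prems)
    also have "\<dots> \<le> gg X" using gg_super[OF Suc.prems(2) _ _ Suc.prems(1)] False by auto
    finally show ?thesis .
  qed
qed

lemma und_le: assumes "\<delta> \<ge> 0" "X \<subseteq> V" shows "real N * und S \<delta> N X \<le> Gb"
proof -
  have dec: "und S \<delta> N X \<le> und S \<delta> k X" if "k \<le> N" for k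
    using that
  proof (induction N)
    case 0 then show ?case by simp
  next
    case (Suc N)
    then show ?case using und_dec[OF assms(1), of S N X] by (cases "k = Suc N") auto
  qed
  have "real N * und S \<delta> N X = (\<Sum>k<N. und S \<delta> N X)" by simp
  also have "\<dots> \<le> (\<Sum>k<N. und S \<delta> k X)" using dec by (intro sum_mono) auto
  also have "\<dots> \<le> gg X" using und_sum assms by blast
  also have "\<dots> \<le> Gb" by (rule gg_le)
  finally show ?thesis .
qed


lemma Top_bound3:
  assumes "\<And>u. u \<in> V \<Longrightarrow> aw S \<delta> X u * h1 (insert u X) + (1 - aw S \<delta> X u) * h1 (X - {u})
      \<le> p u + (aw S \<delta> X u * h2 (insert u X) + (1 - aw S \<delta> X u) * h2 (X - {u})) + c"
  shows "Top S \<delta> h1 X \<le> (\<Sum>u\<in>V. (1/nn) * p u) + Top S \<delta> h2 X + c"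
proof -
  have "Top S \<delta> h1 X \<le> (\<Sum>u\<in>V. (1/nn) * (p u + (aw S \<delta> X u * h2 (insert u X) + (1 - aw S \<delta> X u) * h2 (X - {u})) + c))"
    unfolding Top_def using assms nn_pos by (intro sum_mono mult_left_mono) auto
  also have "\<dots> = (\<Sum>u\<in>V. (1/nn) * p u) + Top S \<delta> h2 X + (\<Sum>u\<in>V. (1/nn) * c)"
    by (simp only: Top_def distrib_left sum.distrib)
  also have "(\<Sum>u\<in>V. (1/nn) * c) = c" using nn_pos by simp
  finally show ?thesis .
qed

definition Kup :: "'a set \<Rightarrow> 'a \<Rightarrow> 'a set \<Rightarrow> 'a set" where
  "Kup X u K = (if in_nbrs E u \<inter> X \<noteq> {} then insert u K else K)"

fun PP :: "'a set \<Rightarrow> nat \<Rightarrow> 'a set \<Rightarrow> 'a set \<Rightarrow> real" where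
  "PP S 0 K X = (if X = {} \<and> K \<inter> S = {} then 1 else 0)"
| "PP S (Suc N) K X = (if X = {} then (if K \<inter> S = {} then 1 else 0) else
     (\<Sum>u\<in>V. (1/nn) * (a0 X u * PP S N (Kup X u K) (insert u X) + (1 - a0 X u) * PP S N (Kup X u K) (X - {u}))))"

lemma Kup_S: "(Kup X u K \<inter> S = {}) \<longleftrightarrow> (K \<inter> S = {} \<and> Kup X u {} \<inter> S = {})"
  unfolding Kup_def by auto

lemma PP_K: "PP S N K X = (if K \<inter> S = {} then PP S N {} X else 0)"
proof (induction N arbitrary: K X)
  case 0 then show ?case by simp
next
  case (Suc N)
  show ?case
  proof (cases "X = {}")
    case True then show ?thesis by simp
  next
    case False
    have e: "PP S N (Kup X u K) Y = (if K \<inter> S = {} then PP S N (Kup X u {}) Y else 0)" for u Y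
      using Suc.IH[of "Kup X u K" Y] Suc.IH[of "Kup X u {}" Y] Kup_S[of X u K S] by auto
    show ?thesis using False by (simp add: e)
  qed
qed

lemma PP_bounds: "0 \<le> PP S N K X \<and> PP S N K X \<le> 1"
proof (induction N arbitrary: K X)
  case 0 then show ?case by simp
next
  case (Suc N)
  show ?case
  proof (cases "X = {}")
    case True then show ?thesis by simp
  next
    case False
    have lo: "(\<Sum>u\<in>V. (1/nn) * (a0 X u * PP S N (Kup X u K) (insert u X) + (1 - a0 X u) * PP S N (Kup X u K) (X - {u}))) \<ge> 0"
      using Suc.IH a0_bounds nn_pos by (intro sum_nonneg mult_nonneg_nonneg add_nonneg_nonneg) auto
    have "(\<Sum>u\<in>V. (1/nn) * (a0 X u * PP S N (Kup X u K) (insert u X) + (1 - a0 X u) * PP S N (Kup X u K) (X - {u})))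
        \<le> (\<Sum>u\<in>V. (1/nn) * (a0 X u * 1 + (1 - a0 X u) * 1))"
      using Suc.IH a0_bounds nn_pos by (intro sum_mono mult_left_mono add_mono) auto
    also have "\<dots> = 1" using nn_pos by simp
    finally show ?thesis using lo False by simp
  qed
qed

lemma PP_inc: "PP S N K X \<le> PP S (Suc N) K X"
proof (induction N arbitrary: K X)
  case 0
  show ?case
  proof (cases "X = {}")
    case True then show ?thesis by simp
  next
    case False
    then show ?thesis using PP_bounds[of S "Suc 0" K X] by simp
  qed
next
  case (Suc N)
  show ?case
  proof (cases "X = {}")
    case True then show ?thesis by simp
  next
    case False
    have "(\<Sum>u\<in>V. (1/nn) * (a0 X u * PP S N (Kup X u K) (insert u X) + (1 - a0 X u) * PP S N (Kup X u K) (X - {u})))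
       \<le> (\<Sum>u\<in>V. (1/nn) * (a0 X u * PP S (Suc N) (Kup X u K) (insert u X) + (1 - a0 X u) * PP S (Suc N) (Kup X u K) (X - {u})))"
      using a0_bounds nn_pos by (intro sum_mono mult_left_mono add_mono) (auto simp del: PP.simps intro: Suc.IH)
    then show ?thesis using False by (simp only: PP.simps(2)[of S N] PP.simps(2)[of S "Suc N"]) simp
  qed
qed

lemma PP_super: "PP S1 N K X + PP S2 N K X \<le> PP (S1 \<union> S2) N K X + PP (S1 \<inter> S2) N K X"
proof (induction N arbitrary: K X)
  case 0 then show ?case by auto
next
  case (Suc N)
  show ?case
  proof (cases "X = {}")
    case True then show ?thesis by auto
  next
    case False
    let ?f = "\<lambda>S u. (1/nn) * (a0 X u * PP S N (Kup X u K) (insert u X) + (1 - a0 X u) * PP S N (Kup X u K) (X - {u}))"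
    have "(\<Sum>u\<in>V. ?f S1 u) + (\<Sum>u\<in>V. ?f S2 u) \<le> (\<Sum>u\<in>V. ?f (S1 \<union> S2) u) + (\<Sum>u\<in>V. ?f (S1 \<inter> S2) u)"
    proof -
      have "\<And>u. u \<in> V \<Longrightarrow> ?f S1 u + ?f S2 u \<le> ?f (S1 \<union> S2) u + ?f (S1 \<inter> S2) u"
      proof -
        fix u assume u: "u \<in> V"
        have i1: "PP S1 N (Kup X u K) (insert u X) + PP S2 N (Kup X u K) (insert u X) \<le>
           PP (S1 \<union> S2) N (Kup X u K) (insert u X) + PP (S1 \<inter> S2) N (Kup X u K) (insert u X)" by (rule Suc.IH)
        have i2: "PP S1 N (Kup X u K) (X - {u}) + PP S2 N (Kup X u K) (X - {u}) \<le>
           PP (S1 \<union> S2) N (Kup X u K) (X - {u}) + PP (S1 \<inter> S2) N (Kup X u K) (X - {u})" by (rule Suc.IH)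
        have a: "0 \<le> a0 X u" "a0 X u \<le> 1" using a0_bounds[OF u] by auto
        have "a0 X u * (PP S1 N (Kup X u K) (insert u X) + PP S2 N (Kup X u K) (insert u X)) \<le>
              a0 X u * (PP (S1 \<union> S2) N (Kup X u K) (insert u X) + PP (S1 \<inter> S2) N (Kup X u K) (insert u X))"
          using i1 a by (intro mult_left_mono) auto
        moreover have "(1 - a0 X u) * (PP S1 N (Kup X u K) (X - {u}) + PP S2 N (Kup X u K) (X - {u})) \<le>
              (1 - a0 X u) * (PP (S1 \<union> S2) N (Kup X u K) (X - {u}) + PP (S1 \<inter> S2) N (Kup X u K) (X - {u}))"
          using i2 a by (intro mult_left_mono) auto
        ultimately have "a0 X u * PP S1 N (Kup X u K) (insert u X) + (1 - a0 X u) * PP S1 N (Kup X u K) (X - {u})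
            + (a0 X u * PP S2 N (Kup X u K) (insert u X) + (1 - a0 X u) * PP S2 N (Kup X u K) (X - {u}))
          \<le> a0 X u * PP (S1 \<union> S2) N (Kup X u K) (insert u X) + (1 - a0 X u) * PP (S1 \<union> S2) N (Kup X u K) (X - {u})
            + (a0 X u * PP (S1 \<inter> S2) N (Kup X u K) (insert u X) + (1 - a0 X u) * PP (S1 \<inter> S2) N (Kup X u K) (X - {u}))"
          by (simp add: algebra_simps)
        from mult_left_mono[OF this, of "1/nn"]
        show "?f S1 u + ?f S2 u \<le> ?f (S1 \<union> S2) u + ?f (S1 \<inter> S2) u"
          using nn_pos by (simp add: algebra_simps)
      qed
      then show ?thesis by (simp add: sum.distrib[symmetric] sum_mono)
    qed
    then show ?thesis using False by simp
  qed
qed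


lemma B1:
  assumes dl: "\<delta> \<ge> 0"
  shows "Y \<subseteq> V \<Longrightarrow> Y \<inter> S \<noteq> {} \<Longrightarrow> ext S \<delta> N Y \<le> (nn / (1+\<delta>)) * gg Y"
proof (induction N arbitrary: Y)
  case 0
  then have "Y \<noteq> {}" by auto
  then show ?case using gg_nonneg[OF 0(1)] dl nn_pos by simp
next
  case (Suc N)
  define e1 where "e1 = nn / (1+\<delta>)"
  have e1: "e1 \<ge> 0" using dl nn_pos by (simp add: e1_def)
  show ?case
  proof (cases "Y = V")
    case True
    have "0 \<le> e1 * gg Y" using e1 gg_nonneg[OF Suc.prems(1)] by simp
    then show ?thesis using ext_V[OF dl] True unfolding e1_def by (simp del: ext.simps)
  next
    case nV: False
    have Yne: "Y \<noteq> {}" using Suc.prems by auto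
    have "ext S \<delta> (Suc N) Y \<le> (\<Sum>u\<in>V. (1/nn) * 0) + Top S \<delta> (\<lambda>Z. e1 * gg Z) Y + e1"
      unfolding ext.simps
    proof (rule Top_bound3)
      fix u assume u: "u \<in> V"
      let ?a = "aw S \<delta> Y u"
      have a: "0 \<le> ?a" "?a \<le> 1" using aw_bounds[OF u dl] by auto
      have ins: "ext S \<delta> N (insert u Y) \<le> e1 * gg (insert u Y)"
        using Suc.IH[of "insert u Y"] Suc.prems u unfolding e1_def by auto
      show "?a * ext S \<delta> N (insert u Y) + (1 - ?a) * ext S \<delta> N (Y - {u})
           \<le> 0 + (?a * (e1 * gg (insert u Y)) + (1 - ?a) * (e1 * gg (Y - {u}))) + e1"
      proof (cases "(Y - {u}) \<inter> S = {}")
        case False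
        have del: "ext S \<delta> N (Y - {u}) \<le> e1 * gg (Y - {u})"
          using Suc.IH[of "Y - {u}"] Suc.prems False unfolding e1_def by auto
        have "?a * ext S \<delta> N (insert u Y) \<le> ?a * (e1 * gg (insert u Y))" using ins a by (intro mult_left_mono) auto
        moreover have "(1 - ?a) * ext S \<delta> N (Y - {u}) \<le> (1 - ?a) * (e1 * gg (Y - {u}))" using del a by (intro mult_left_mono) auto
        ultimately show ?thesis using e1 by linarith
      next
        case True
        then have uS: "u \<in> S" "u \<in> Y" using Suc.prems by auto
        have touch: "in_nbrs E u \<inter> Y \<noteq> {}" using nb_self[OF u] uS by auto
        have t: "1 - ?a \<le> e1" using aw_touch[OF u uS(1) touch dl] unfolding e1_def .
        have "?a * ext S \<delta> N (insert u Y) \<le> ?a * (e1 * gg (insert u Y))" using ins a by (intro mult_left_mono) auto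
        moreover have "(1 - ?a) * ext S \<delta> N (Y - {u}) \<le> 1 - ?a"
          using mult_left_mono[of "ext S \<delta> N (Y - {u})" 1 "1 - ?a"] ext_bounds[OF dl] a by auto
        moreover have "(1 - ?a) * (e1 * gg (Y - {u})) \<ge> 0"
        proof -
          have "gg (Y - {u}) \<ge> 0" using gg_nonneg[of "Y - {u}"] Suc.prems(1) by auto
          then show ?thesis using a e1 by simp
        qed
        ultimately show ?thesis using t by linarith
      qed
    qed
    also have "\<dots> = e1 * Top S \<delta> gg Y + e1" by (simp add: Top_cmult)
    also have "\<dots> \<le> e1 * gg Y" using gg_super[OF Suc.prems(1) Yne nV dl] e1
      by (metis distrib_left mult.right_neutral mult_left_mono add.commute)
    finally show ?thesis unfolding e1_def .
  qed
qed

lemma B2: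
  assumes dl: "\<delta> \<ge> 0"
  shows "X \<inter> S = {} \<Longrightarrow> PP S N {} X \<le> ext S \<delta> N X"
proof (induction N arbitrary: X)
  case 0 then show ?case by simp
next
  case (Suc N)
  show ?case
  proof (cases "X = {}")
    case True then show ?thesis by (simp add: Top_empty ext_empty del: ext.simps)
  next
    case False
    have "PP S (Suc N) {} X = (\<Sum>u\<in>V. (1/nn) * (a0 X u * PP S N (Kup X u {}) (insert u X) + (1 - a0 X u) * PP S N (Kup X u {}) (X - {u})))"
      using False by simp
    also have "\<dots> \<le> Top S \<delta> (ext S \<delta> N) X"
      unfolding Top_def
    proof (intro sum_mono mult_left_mono)
      fix u assume u: "u \<in> V"
      have a: "0 \<le> aw S \<delta> X u" "aw S \<delta> X u \<le> 1" using aw_bounds[OF u dl] by auto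
      have eb: "\<And>Y. 0 \<le> ext S \<delta> N Y" using ext_bounds[OF dl] by blast
      show "a0 X u * PP S N (Kup X u {}) (insert u X) + (1 - a0 X u) * PP S N (Kup X u {}) (X - {u})
          \<le> aw S \<delta> X u * ext S \<delta> N (insert u X) + (1 - aw S \<delta> X u) * ext S \<delta> N (X - {u})"
      proof (cases "u \<in> S")
        case uS: True
        show ?thesis
        proof (cases "in_nbrs E u \<inter> X = {}")
          case True
          have "Kup X u {} = {}" using True by (simp add: Kup_def)
          moreover have "a0 X u = 0" "aw S \<delta> X u = 0" using True by (auto simp: a0_zero aw_zero)
          moreover have "PP S N {} (X - {u}) \<le> ext S \<delta> N (X - {u})" using Suc.IH[of "X - {u}"] Suc.prems by auto
          ultimately show ?thesis by simp
        next
          case False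
          have "Kup X u {} = {u}" using False by (simp add: Kup_def)
          then have "PP S N (Kup X u {}) Y = 0" for Y using uS PP_K[of S N "Kup X u {}" Y] by auto
          then show ?thesis using a eb by simp
        qed
      next
        case uS: False
        have k: "Kup X u {} \<inter> S = {}" using uS by (auto simp: Kup_def)
        have e: "PP S N (Kup X u {}) Y = PP S N {} Y" for Y using PP_K[of S N "Kup X u {}" Y] k by simp
        have i1: "PP S N {} (insert u X) \<le> ext S \<delta> N (insert u X)" using Suc.IH[of "insert u X"] Suc.prems uS by auto
        have i2: "PP S N {} (X - {u}) \<le> ext S \<delta> N (X - {u})" using Suc.IH[of "X - {u}"] Suc.prems by auto
        have aa: "aw S \<delta> X u = a0 X u" using aw_nS[OF uS] .
        show ?thesis unfolding e aa using i1 i2 a aa by (intro add_mono mult_left_mono) auto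
      qed
    qed (use nn_pos in auto)
    finally show ?thesis by simp
  qed
qed


lemma B3:
  assumes dl: "\<delta> \<ge> 0"
  shows "X \<subseteq> V \<Longrightarrow> X \<inter> S = {} \<Longrightarrow>
    ext S \<delta> N X \<le> PP S N {} X + ((nn / (1+\<delta>)) * Gb + nn / (1+\<delta>)) * gg X"
proof (induction N arbitrary: X)
  define e1 where "e1 = nn / (1+\<delta>)"
  have e1: "e1 \<ge> 0" using dl nn_pos by (simp add: e1_def)
  define e2 where "e2 = e1 * Gb + e1"
  have e2: "e2 \<ge> 0" using e1 Gb_nonneg by (simp add: e2_def)
  {
    case 0
    have "e2 * gg X \<ge> 0" using e2 gg_nonneg[OF 0(1)] by simp
    then show ?case unfolding e2_def e1_def by simp
  next
    case (Suc N)
    have g0: "e2 * gg X \<ge> 0" using e2 gg_nonneg[OF Suc.prems(1)] by simp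
    have PP0: "PP S M K Y \<ge> 0" for M K Y using PP_bounds by blast
    show ?case
    proof (cases "X = {} \<or> X = V")
      case True
      then show ?thesis
      proof
        assume "X = {}" then show ?thesis using g0 unfolding e2_def e1_def by (simp add: ext_empty del: ext.simps)
      next
        assume "X = V" then show ?thesis using g0 ext_V[OF dl] PP0[of "Suc N" "{}" X] unfolding e2_def e1_def
          by (simp del: ext.simps PP.simps)
      qed
    next
      case False
      then have Xne: "X \<noteq> {}" "X \<noteq> V" by auto
      let ?p = "\<lambda>u. a0 X u * PP S N (Kup X u {}) (insert u X) + (1 - a0 X u) * PP S N (Kup X u {}) (X - {u})"
      have "ext S \<delta> (Suc N) X \<le> (\<Sum>u\<in>V. (1/nn) * ?p u) + Top S \<delta> (\<lambda>Z. e2 * gg Z) X + e2"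
        unfolding ext.simps
      proof (rule Top_bound3)
        fix u assume u: "u \<in> V"
        let ?a = "aw S \<delta> X u"
        have a: "0 \<le> ?a" "?a \<le> 1" using aw_bounds[OF u dl] by auto
        have gi: "0 \<le> gg (insert u X)" "0 \<le> gg (X - {u})"
          using gg_nonneg[of "insert u X"] gg_nonneg[of "X - {u}"] Suc.prems(1) u by auto
        show "?a * ext S \<delta> N (insert u X) + (1 - ?a) * ext S \<delta> N (X - {u})
           \<le> ?p u + (?a * (e2 * gg (insert u X)) + (1 - ?a) * (e2 * gg (X - {u}))) + e2"
        proof (cases "u \<in> S")
          case uS: True
          show ?thesis
          proof (cases "in_nbrs E u \<inter> X = {}")
            case True
            have "Kup X u {} = {}" using True by (simp add: Kup_def)
            moreover have "a0 X u = 0" "?a = 0" using True by (auto simp: a0_zero aw_zero)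
            moreover have "ext S \<delta> N (X - {u}) \<le> PP S N {} (X - {u}) + e2 * gg (X - {u})"
              using Suc.IH[of "X - {u}"] Suc.prems unfolding e2_def e1_def by auto
            ultimately show ?thesis using e2 by simp
          next
            case touch: False
            have "Kup X u {} = {u}" using touch by (simp add: Kup_def)
            then have pz: "?p u = 0" using uS PP_K[of S N "Kup X u {}"] by auto
            have t: "1 - ?a \<le> e1" using aw_touch[OF u uS touch dl] unfolding e1_def .
            have ins: "ext S \<delta> N (insert u X) \<le> e1 * gg (insert u X)"
              using B1[OF dl, where Y="insert u X" and S=S and N=N] Suc.prems u uS unfolding e1_def by auto
            have "?a * ext S \<delta> N (insert u X) \<le> 1 * (e1 * Gb)"
            proof -
              have "?a * ext S \<delta> N (insert u X) \<le> ?a * (e1 * gg (insert u X))" using ins a by (intro mult_left_mono) auto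
              also have "\<dots> \<le> 1 * (e1 * Gb)" using a e1 gg_le[of "insert u X"] gi
                by (intro mult_mono mult_left_mono) auto
              finally show ?thesis .
            qed
            moreover have "(1 - ?a) * ext S \<delta> N (X - {u}) \<le> 1 - ?a"
              using mult_left_mono[of "ext S \<delta> N (X - {u})" 1 "1 - ?a"] ext_bounds[OF dl] a by auto
            moreover have "0 \<le> ?a * (e2 * gg (insert u X)) + (1 - ?a) * (e2 * gg (X - {u}))"
              using a e2 gi by simp
            ultimately show ?thesis using t pz unfolding e2_def by linarith
          qed
        next
          case uS: False
          have k: "Kup X u {} \<inter> S = {}" using uS by (auto simp: Kup_def)
          have e: "PP S N (Kup X u {}) Y = PP S N {} Y" for Y using PP_K[of S N "Kup X u {}" Y] k by simp
          have i1: "ext S \<delta> N (insert u X) \<le> PP S N {} (insert u X) + e2 * gg (insert u X)"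
            using Suc.IH[of "insert u X"] Suc.prems uS u unfolding e2_def e1_def by auto
          have i2: "ext S \<delta> N (X - {u}) \<le> PP S N {} (X - {u}) + e2 * gg (X - {u})"
            using Suc.IH[of "X - {u}"] Suc.prems unfolding e2_def e1_def by auto
          have aa: "?a = a0 X u" using aw_nS[OF uS] .
          have "?a * ext S \<delta> N (insert u X) \<le> ?a * (PP S N {} (insert u X) + e2 * gg (insert u X))"
            using i1 a by (intro mult_left_mono) auto
          moreover have "(1 - ?a) * ext S \<delta> N (X - {u}) \<le> (1 - ?a) * (PP S N {} (X - {u}) + e2 * gg (X - {u}))"
            using i2 a by (intro mult_left_mono) auto
          ultimately show ?thesis unfolding e aa using e2 by (simp add: algebra_simps)
        qed
      qed
      also have "\<dots> = PP S (Suc N) {} X + e2 * Top S \<delta> gg X + e2"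
        using Xne by (simp add: Top_cmult)
      also have "\<dots> \<le> PP S (Suc N) {} X + e2 * gg X"
      proof -
        have "e2 * (1 + Top S \<delta> gg X) \<le> e2 * gg X" using mult_left_mono[OF gg_super[OF Suc.prems(1) Xne dl] e2] .
        then show ?thesis by (simp add: algebra_simps)
      qed
      finally show ?thesis unfolding e2_def e1_def .
    qed
  }
qed


end
context vm begin

definition PL :: "'a set \<Rightarrow> 'a set \<Rightarrow> 'a set \<Rightarrow> real" where
  "PL S K X = (SUP N. PP S N K X)"

lemma PL_conv: "(\<lambda>N. PP S N K X) \<longlonglongrightarrow> PL S K X"
  unfolding PL_def
proof (rule LIMSEQ_incseq_SUP)
  show "bdd_above (range (\<lambda>N. PP S N K X))" using PP_bounds by (intro bdd_aboveI[of _ 1]) auto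
  show "incseq (\<lambda>N. PP S N K X)" using PP_inc by (intro incseq_SucI) auto
qed

lemma PP_le_PL: "PP S N K X \<le> PL S K X"
proof -
  have "incseq (\<lambda>N. PP S N K X)" using PP_inc by (intro incseq_SucI) auto
  then show ?thesis using incseq_le PL_conv by blast
qed

lemma PL_K: "PL S K X = (if K \<inter> S = {} then PL S {} X else 0)"
  unfolding PL_def by (subst PP_K) simp

lemma PL_super: "PL S1 K X + PL S2 K X \<le> PL (S1 \<union> S2) K X + PL (S1 \<inter> S2) K X"
  by (rule LIMSEQ_le[OF tendsto_add[OF PL_conv PL_conv] tendsto_add[OF PL_conv PL_conv]]) (auto intro: PP_super)

abbreviation fps :: "'a set \<Rightarrow> real \<Rightarrow> 'a set \<Rightarrow> real" where
  "fps S \<delta> X \<equiv> fp_set V E (\<lambda>_. 1) S \<delta> X"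

lemma hw_eq: "\<delta> \<ge> 0 \<Longrightarrow> hw S \<delta> N X = 1 - ext S \<delta> N X - und S \<delta> N X"
  using total[of \<delta> S N X] by linarith

lemma hw_bounds: assumes dl: "\<delta> \<ge> 0" shows "0 \<le> hw S \<delta> N X \<and> hw S \<delta> N X \<le> 1"
proof (induction N arbitrary: X)
  case 0 then show ?case by simp
next
  case (Suc N)
  have "Top S \<delta> (\<lambda>_. 0) X \<le> Top S \<delta> (hw S \<delta> N) X" using Suc dl by (intro Top_mono) auto
  moreover have "Top S \<delta> (hw S \<delta> N) X \<le> Top S \<delta> (\<lambda>_. 1) X" using Suc dl by (intro Top_mono) auto
  ultimately show ?case by (simp only: hw_Suc[OF dl]) (simp add: Top_const)
qed

lemma hw_inc: assumes dl: "\<delta> \<ge> 0" shows "hw S \<delta> N X \<le> hw S \<delta> (Suc N) X"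
proof (induction N arbitrary: X)
  case 0
  show ?case
  proof (cases "X = V")
    case True then show ?thesis by (simp only: hw_Suc[OF dl]) simp
  next
    case False
    have "0 \<le> hw S \<delta> (Suc 0) X" using hw_bounds[OF dl] by blast
    then show ?thesis using False by simp
  qed
next
  case (Suc N)
  have "Top S \<delta> (hw S \<delta> N) X \<le> Top S \<delta> (hw S \<delta> (Suc N)) X" by (intro Top_mono dl Suc.IH)
  then show ?case by (simp only: hw_Suc[OF dl, of S "Suc N"] hw_Suc[OF dl, of S N]) simp
qed


lemma hw_conv: assumes dl: "\<delta> \<ge> 0" shows "(\<lambda>N. hw S \<delta> N X) \<longlonglongrightarrow> fps S \<delta> X"
  unfolding fp_set_def
proof (rule LIMSEQ_incseq_SUP)
  show "bdd_above (range (\<lambda>N. hw S \<delta> N X))"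
  proof (rule bdd_aboveI[of _ 1])
    fix x assume "x \<in> range (\<lambda>N. hw S \<delta> N X)"
    then obtain n where x: "x = hw S \<delta> n X" by auto
    have "0 \<le> ext S \<delta> n X" "0 \<le> und S \<delta> n X" using ext_bounds[OF dl] und_bounds[OF dl] by auto
    then show "x \<le> 1" using hw_eq[OF dl, of S n X] x by linarith
  qed
  show "incseq (\<lambda>N. hw S \<delta> N X)"
  proof (rule incseq_SucI)
    fix N
    show "hw S \<delta> N X \<le> hw S \<delta> (Suc N) X"
      using hw_inc[OF dl] .
  qed
qed

lemma und_tendsto: assumes dl: "\<delta> \<ge> 0" and X: "X \<subseteq> V" shows "(\<lambda>N. und S \<delta> N X) \<longlonglongrightarrow> 0"
proof (rule tendsto_sandwich[of "\<lambda>_. 0" _ _ "\<lambda>N. Gb / real N"])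
  show "\<forall>\<^sub>F N in sequentially. 0 \<le> und S \<delta> N X" using und_bounds[OF dl] by auto
  show "\<forall>\<^sub>F N in sequentially. und S \<delta> N X \<le> Gb / real N"
  proof (rule eventually_sequentiallyI[of 1])
    fix N :: nat assume "1 \<le> N"
    then have "real N > 0" by simp
    then show "und S \<delta> N X \<le> Gb / real N" using und_le[OF dl X, of N S] by (simp add: field_simps)
  qed
  show "(\<lambda>N. Gb / real N) \<longlonglongrightarrow> 0" by (rule lim_const_over_n)
qed simp

lemma L_upper: assumes dl: "\<delta> \<ge> 0" and X: "X \<subseteq> V" "X \<inter> S = {}"
  shows "fps S \<delta> X \<le> 1 - PL S {} X"
proof (rule LIMSEQ_le[OF hw_conv[OF dl] tendsto_diff[OF tendsto_const PL_conv]])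
  show "\<exists>N. \<forall>n\<ge>N. hw S \<delta> n X \<le> 1 - PP S n {} X"
  proof (intro exI allI impI)
    fix n
    have "PP S n {} X \<le> ext S \<delta> n X" using B2[OF dl X(2)] .
    moreover have "0 \<le> und S \<delta> n X" using und_bounds[OF dl] by blast
    ultimately show "hw S \<delta> n X \<le> 1 - PP S n {} X" using hw_eq[OF dl, of S n X] by linarith
  qed
qed

lemma L_lower: assumes dl: "\<delta> \<ge> 0" and X: "X \<subseteq> V" "X \<inter> S = {}"
  shows "1 - PL S {} X - ((nn / (1+\<delta>)) * Gb + nn / (1+\<delta>)) * Gb \<le> fps S \<delta> X"
proof -
  define e2 where "e2 = (nn / (1+\<delta>)) * Gb + nn / (1+\<delta>)"
  have e2: "e2 \<ge> 0" using dl nn_pos Gb_nonneg by (simp add: e2_def)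
  have "(\<lambda>N. 1 - PL S {} X - e2 * Gb - und S \<delta> N X) \<longlonglongrightarrow> 1 - PL S {} X - e2 * Gb - 0"
    by (intro tendsto_intros und_tendsto[OF dl X(1)])
  moreover have "\<exists>N. \<forall>n\<ge>N. 1 - PL S {} X - e2 * Gb - und S \<delta> n X \<le> hw S \<delta> n X"
  proof (intro exI allI impI)
    fix n
    have "ext S \<delta> n X \<le> PP S n {} X + e2 * gg X" using B3[OF dl X] unfolding e2_def .
    moreover have "e2 * gg X \<le> e2 * Gb" using gg_le e2 by (simp add: mult_left_mono)
    moreover have "PP S n {} X \<le> PL S {} X" by (rule PP_le_PL)
    ultimately show "1 - PL S {} X - e2 * Gb - und S \<delta> n X \<le> hw S \<delta> n X" using hw_eq[OF dl, of S n X] by linarith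
  qed
  ultimately have "1 - PL S {} X - e2 * Gb - 0 \<le> fps S \<delta> X" using LIMSEQ_le[OF _ hw_conv[OF dl]] by blast
  then show ?thesis unfolding e2_def by simp
qed

lemma L_lowerS: assumes dl: "\<delta> \<ge> 0" and X: "X \<subseteq> V" "X \<inter> S \<noteq> {}"
  shows "1 - (nn / (1+\<delta>)) * Gb \<le> fps S \<delta> X"
proof -
  define e1 where "e1 = nn / (1+\<delta>)"
  have e1: "e1 \<ge> 0" using dl nn_pos by (simp add: e1_def)
  have "(\<lambda>N. 1 - e1 * Gb - und S \<delta> N X) \<longlonglongrightarrow> 1 - e1 * Gb - 0"
    by (intro tendsto_intros und_tendsto[OF dl X(1)])
  moreover have "\<exists>N. \<forall>n\<ge>N. 1 - e1 * Gb - und S \<delta> n X \<le> hw S \<delta> n X"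
  proof (intro exI allI impI)
    fix n
    have "ext S \<delta> n X \<le> e1 * gg X" using B1[OF dl X] unfolding e1_def .
    moreover have "e1 * gg X \<le> e1 * Gb" using gg_le e1 by (simp add: mult_left_mono)
    ultimately show "1 - e1 * Gb - und S \<delta> n X \<le> hw S \<delta> n X" using hw_eq[OF dl, of S n X] by linarith
  qed
  ultimately have "1 - e1 * Gb - 0 \<le> fps S \<delta> X" using LIMSEQ_le[OF _ hw_conv[OF dl]] by blast
  then show ?thesis unfolding e1_def by simp
qed

lemma L_le1: assumes dl: "\<delta> \<ge> 0" shows "fps S \<delta> X \<le> 1"
proof (rule LIMSEQ_le[OF hw_conv[OF dl] tendsto_const])
  show "\<exists>N. \<forall>n\<ge>N. hw S \<delta> n X \<le> 1"
  proof (intro exI allI impI)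
    fix n
    have "0 \<le> ext S \<delta> n X" "0 \<le> und S \<delta> n X" using ext_bounds[OF dl] und_bounds[OF dl] by auto
    then show "hw S \<delta> n X \<le> 1" using hw_eq[OF dl, of S n X] by linarith
  qed
qed


definition rr :: "'a set \<Rightarrow> 'a \<Rightarrow> real" where "rr S u = PL S {u} {u}"

definition LL :: "'a set \<Rightarrow> real" where "LL S = (1/nn) * (\<Sum>u\<in>V. 1 - rr S u)"

lemma fps_close:
  assumes dl: "\<delta> \<ge> 0" and u: "u \<in> V"
  shows "\<bar>fps S \<delta> {u} - (1 - rr S u)\<bar> \<le> ((nn / (1+\<delta>)) * Gb + nn / (1+\<delta>)) * Gb"
proof -
  have e1: "nn / (1+\<delta>) \<ge> 0" using dl nn_pos by simp
  have X: "{u} \<subseteq> V" using u by simp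
  show ?thesis
  proof (cases "u \<in> S")
    case True
    then have r: "rr S u = 0" unfolding rr_def using PL_K[of S "{u}" "{u}"] by simp
    have "1 - (nn / (1+\<delta>)) * Gb \<le> fps S \<delta> {u}" using L_lowerS[OF dl X] True by auto
    moreover have "fps S \<delta> {u} \<le> 1" by (rule L_le1[OF dl])
    moreover have "(nn / (1+\<delta>)) * Gb \<le> ((nn / (1+\<delta>)) * Gb + nn / (1+\<delta>)) * Gb"
    proof -
      have "0 \<le> nn * (Gb * Gb) / (1 + \<delta>)" using nn_pos dl Gb_nonneg by simp
      then show ?thesis by (simp add: algebra_simps)
    qed
    ultimately show ?thesis unfolding r abs_le_iff by linarith
  next
    case False
    then have r: "rr S u = PL S {} {u}" unfolding rr_def using PL_K[of S "{u}" "{u}"] by simp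
    have "{u} \<inter> S = {}" using False by simp
    then have "fps S \<delta> {u} \<le> 1 - PL S {} {u}" "1 - PL S {} {u} - ((nn / (1+\<delta>)) * Gb + nn / (1+\<delta>)) * Gb \<le> fps S \<delta> {u}"
      using L_upper[OF dl X] L_lower[OF dl X] by auto
    moreover have "((nn / (1+\<delta>)) * Gb + nn / (1+\<delta>)) * Gb \<ge> 0"
    proof -
      have "0 \<le> (nn / (1+\<delta>)) * Gb" using e1 Gb_nonneg by (rule mult_nonneg_nonneg)
      then have "0 \<le> (nn / (1+\<delta>)) * Gb + nn / (1+\<delta>)" using e1 by linarith
      then show ?thesis using Gb_nonneg by simp
    qed
    ultimately show ?thesis unfolding r abs_le_iff by linarith
  qed
qed

lemma fp_tendsto: "((\<lambda>\<delta>. fp V E (\<lambda>_. 1) S \<delta>) \<longlongrightarrow> LL S) at_top"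
proof -
  define C where "C = nn * ((Gb + 1) * Gb)"
  have C: "((nn / (1+\<delta>)) * Gb + nn / (1+\<delta>)) * Gb = C / (1 + \<delta>)" for \<delta>
  proof -
    have "((nn / (1+\<delta>)) * Gb + nn / (1+\<delta>)) * Gb = (nn / (1+\<delta>)) * ((Gb + 1) * Gb)" by (simp add: algebra_simps)
    then show ?thesis unfolding C_def by simp
  qed
  have g0: "((\<lambda>\<delta>::real. C / (1 + \<delta>)) \<longlongrightarrow> 0) at_top"
  proof (rule tendsto_divide_0[OF tendsto_const])
    show "filterlim (\<lambda>\<delta>::real. 1 + \<delta>) at_infinity at_top"
      by (rule filterlim_at_top_imp_at_infinity) (rule filterlim_tendsto_add_at_top[OF tendsto_const filterlim_ident])
  qed
  have ev: "\<forall>\<^sub>F \<delta> in at_top. norm (fp V E (\<lambda>_. 1) S \<delta> - LL S) \<le> C / (1 + \<delta>)"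
  proof (rule eventually_at_top_linorderI[of 0])
    fix \<delta> :: real assume dl: "\<delta> \<ge> 0"
    have "fp V E (\<lambda>_. 1) S \<delta> - LL S = (1/nn) * (\<Sum>u\<in>V. fps S \<delta> {u} - (1 - rr S u))"
      by (simp only: fp_def LL_def right_diff_distrib sum_subtractf)
    then have "norm (fp V E (\<lambda>_. 1) S \<delta> - LL S) = (1/nn) * \<bar>\<Sum>u\<in>V. fps S \<delta> {u} - (1 - rr S u)\<bar>"
      using nn_pos by (simp add: abs_mult)
    also have "\<dots> \<le> (1/nn) * (\<Sum>u\<in>V. \<bar>fps S \<delta> {u} - (1 - rr S u)\<bar>)"
      using nn_pos by (intro mult_left_mono sum_abs) auto
    also have "\<dots> \<le> (1/nn) * (\<Sum>u\<in>V. C / (1 + \<delta>))"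
      using nn_pos fps_close[OF dl] C by (intro mult_left_mono sum_mono) auto
    also have "\<dots> = C / (1 + \<delta>)" using nn_pos by simp
    finally show "norm (fp V E (\<lambda>_. 1) S \<delta> - LL S) \<le> C / (1 + \<delta>)" .
  qed
  have "((\<lambda>\<delta>. fp V E (\<lambda>_. 1) S \<delta> - LL S) \<longlongrightarrow> 0) at_top"
    by (rule Lim_null_comparison[OF ev g0])
  then show ?thesis by (rule LIM_zero_cancel)
qed

lemma fp_inf_eq: "fp_inf V E (\<lambda>_. 1) S = LL S"
  unfolding fp_inf_def by (rule tendsto_Lim[OF trivial_limit_at_top_linorder fp_tendsto])

lemma LL_sub: "LL S1 + LL S2 \<ge> LL (S1 \<union> S2) + LL (S1 \<inter> S2)"
proof -
  have "(\<Sum>u\<in>V. rr S1 u) + (\<Sum>u\<in>V. rr S2 u) \<le> (\<Sum>u\<in>V. rr (S1 \<union> S2) u) + (\<Sum>u\<in>V. rr (S1 \<inter> S2) u)"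
    unfolding rr_def sum.distrib[symmetric] by (intro sum_mono PL_super)
  moreover have "LL S = 1 - (1/nn) * (\<Sum>u\<in>V. rr S u)" for S
    unfolding LL_def using nn_pos by (simp add: sum_subtractf algebra_simps)
  ultimately have "((\<Sum>u\<in>V. rr S1 u) + (\<Sum>u\<in>V. rr S2 u)) / nn \<le> ((\<Sum>u\<in>V. rr (S1 \<union> S2) u) + (\<Sum>u\<in>V. rr (S1 \<inter> S2) u)) / nn"
    using nn_pos by (intro divide_right_mono) auto
  then show ?thesis using \<open>\<And>S. LL S = 1 - (1/nn) * (\<Sum>u\<in>V. rr S u)\<close> by (simp add: add_divide_distrib)
qed

end

theorem mainTheorem8:
  fixes V :: "'a set" and E :: "('a \<times> 'a) set"
  assumes "finite V" and "V \<noteq> {}"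
    and "E \<subseteq> V \<times> V"
    and "sym E"
    and "\<forall>u\<in>V. (u, u) \<in> E"
    and "\<forall>u\<in>V. \<forall>v\<in>V. (u, v) \<in> E\<^sup>*"
  shows "submodular_on V (\<lambda>S. fp_inf V E (\<lambda>_. 1) S)"
proof -
  interpret vm V E using assms by unfold_locales
  show ?thesis unfolding submodular_on_def fp_inf_eq using LL_sub by auto
qed

end
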